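(* Let $P$ and $P'$ be paths in $T$ such that $P$ is a subpath of $P'$ (i.e. the vertex set of $P$ is contained in that of $P'$). Then (1) $\overline{T}_1(P')\le\overline{T}_1(P)$ and $\overline{T}_2(P)\le\overline{T}_2(P')$; (2) $\overline{S}(P)\le\overline{S}(P')$ and $\overline{S}^2(P)\le\overline{S}^2(P')$; (3) $\overline{Q}(P)\le\overline{Q}(P')$ (in $[0,+\infty]$).
   Context: Let $T=(V,E)$ be a finite tree with vertex set $V=\{v_1,\dots,v_n\}$ and positive edge lengths; $d(x,y)$ denotes the length of the unique path in $T$ between vertices $x,y$. Each vertex $v_i$ has a demand rate $\lambda_i\ge 0$, with $\lambda=\sum_i\lambda_i>0$, and weight $w_i=\lambda_i/\lambda$; $w(T)=\sum_i w_i=1$. A path $P$ is the vertex sequence $p(1),\dots,p(k)$ of a simple path in $T$ (a single vertex is allowed); $|P|=d(p(1),p(k))$, and $d(P,v)=\min_j d(p(j),v)$. For $v\in V$, $p_P(v)$ denotes the unique vertex of $P$ closest to $v$. For a vertex $p$ of $P$, the branch $T_p$ (with respect to $P$) is the set of vertices $v$ with $p_P(v)=p$, and $w_{T_p}=\sum_{v_i\in T_p}w_i$. For a vertex $p$ of $P$ put $\overline{d}_P(p)=\sum_{j=1}^k w_{T_{p(j)}}\,d(p(j),p)$. Fix a speed $v_t>0$, constants $G_i\ge 0$ ($i=1,\dots,n$) and a constant $\overline{G}\ge 0$. Define $\overline{T}_1(P)=\frac{1}{v_t}\sum_i w_i\,d(P,v_i)$, $\overline{T}_2(P)=\frac{1}{v_t}\sum_i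 w_i\,\overline{d}_P(p_P(v_i))$, $\overline{S}(P)=\overline{T}_2(P)+\overline{G}$, $s_i(P)=\frac{1}{v_t}\bigl(\overline{d}_P(p_P(v_i))+G_i\bigr)$, $\overline{S}^2(P)=\sum_i w_i\,s_i(P)^2$, and $\overline{Q}(P)=\dfrac{\lambda\,\overline{S}^2(P)}{2(1-\lambda\overline{S}(P))}$ if $\lambda\overline{S}(P)<1$, $\overline{Q}(P)=+\infty$ otherwise. *)

theory Defs
  imports Complex_Main "HOL-Library.Extended_Real"
begin

definition is_spath :: "'a set \<Rightarrow> ('a \<Rightarrow> 'a \<Rightarrow> bool) \<Rightarrow> 'a list \<Rightarrow> bool" where
  "is_spath V adj ps \<longleftrightarrow> ps \<noteq> [] \<and> distinct ps \<and> set ps \<subseteq> V \<and>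
     (\<forall>i. Suc i < length ps \<longrightarrow> adj (ps ! i) (ps ! Suc i))"

definition graph_connected :: "'a set \<Rightarrow> ('a \<Rightarrow> 'a \<Rightarrow> bool) \<Rightarrow> bool" where
  "graph_connected V adj \<longleftrightarrow>
     (\<forall>x\<in>V. \<forall>y\<in>V. \<exists>ps. is_spath V adj ps \<and> hd ps = x \<and> last ps = y)"

definition is_cycle :: "'a set \<Rightarrow> ('a \<Rightarrow> 'a \<Rightarrow> bool) \<Rightarrow> 'a list \<Rightarrow> bool" where
  "is_cycle V adj cs \<longleftrightarrow> 3 \<le> length cs \<and> is_spath V adj cs \<and> adj (last cs) (hd cs)"

definition is_weighted_tree :: "'a set \<Rightarrow> ('a \<Rightarrow> 'a \<Rightarrow> bool) \<Rightarrow> ('a \<Rightarrow> 'a \<Rightarrow> real) \<Rightarrow> bool" where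
  "is_weighted_tree V adj len \<longleftrightarrow>
     finite V \<and> V \<noteq> {} \<and>
     (\<forall>x y. adj x y \<longrightarrow> x \<in> V \<and> y \<in> V) \<and>
     (\<forall>x y. adj x y \<longrightarrow> adj y x) \<and>
     (\<forall>x. \<not> adj x x) \<and>
     (\<forall>x y. adj x y \<longrightarrow> len x y = len y x \<and> 0 < len x y) \<and>
     graph_connected V adj \<and>
     \<not> (\<exists>cs. is_cycle V adj cs)"

definition plen :: "('a \<Rightarrow> 'a \<Rightarrow> real) \<Rightarrow> 'a list \<Rightarrow> real" where
  "plen len ps = (\<Sum>i<length ps - 1. len (ps ! i) (ps ! Suc i))"

definition tdist :: "'a set \<Rightarrow> ('a \<Rightarrow> 'a \<Rightarrow> bool) \<Rightarrow> ('a \<Rightarrow> 'a \<Rightarrow> real) \<Rightarrow> 'a \<Rightarrow> 'a \<Rightarrow> real" where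
  "tdist V adj len x y =
     plen len (THE ps. is_spath V adj ps \<and> hd ps = x \<and> last ps = y)"

definition pdist :: "('a \<Rightarrow> 'a \<Rightarrow> real) \<Rightarrow> 'a list \<Rightarrow> 'a \<Rightarrow> real" where
  "pdist d P v = Min ((\<lambda>p. d p v) ` set P)"

definition proj :: "('a \<Rightarrow> 'a \<Rightarrow> real) \<Rightarrow> 'a list \<Rightarrow> 'a \<Rightarrow> 'a" where
  "proj d P v = (THE p. p \<in> set P \<and> (\<forall>q\<in>set P. q \<noteq> p \<longrightarrow> d p v < d q v))"

definition branch_w :: "'a set \<Rightarrow> ('a \<Rightarrow> 'a \<Rightarrow> real) \<Rightarrow> ('a \<Rightarrow> real) \<Rightarrow> 'a list \<Rightarrow> 'a \<Rightarrow> real" where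
  "branch_w V d w P p = (\<Sum>v\<in>{v\<in>V. proj d P v = p}. w v)"

definition dbar :: "'a set \<Rightarrow> ('a \<Rightarrow> 'a \<Rightarrow> real) \<Rightarrow> ('a \<Rightarrow> real) \<Rightarrow> 'a list \<Rightarrow> 'a \<Rightarrow> real" where
  "dbar V d w P p = (\<Sum>q\<in>set P. branch_w V d w P q * d q p)"

definition weight :: "'a set \<Rightarrow> ('a \<Rightarrow> real) \<Rightarrow> 'a \<Rightarrow> real" where
  "weight V lam v = lam v / (\<Sum>u\<in>V. lam u)"

definition T1 :: "'a set \<Rightarrow> ('a \<Rightarrow> 'a \<Rightarrow> real) \<Rightarrow> ('a \<Rightarrow> real) \<Rightarrow> real \<Rightarrow> 'a list \<Rightarrow> real" where
  "T1 V d w vt P = (1 / vt) * (\<Sum>v\<in>V. w v * pdist d P v)"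

definition T2 :: "'a set \<Rightarrow> ('a \<Rightarrow> 'a \<Rightarrow> real) \<Rightarrow> ('a \<Rightarrow> real) \<Rightarrow> real \<Rightarrow> 'a list \<Rightarrow> real" where
  "T2 V d w vt P = (1 / vt) * (\<Sum>v\<in>V. w v * dbar V d w P (proj d P v))"

definition Sbar :: "'a set \<Rightarrow> ('a \<Rightarrow> 'a \<Rightarrow> real) \<Rightarrow> ('a \<Rightarrow> real) \<Rightarrow> real \<Rightarrow> real \<Rightarrow> 'a list \<Rightarrow> real" where
  "Sbar V d w vt Gb P = T2 V d w vt P + Gb"

definition s_i :: "'a set \<Rightarrow> ('a \<Rightarrow> 'a \<Rightarrow> real) \<Rightarrow> ('a \<Rightarrow> real) \<Rightarrow> real \<Rightarrow> ('a \<Rightarrow> real) \<Rightarrow> 'a list \<Rightarrow> 'a \<Rightarrow> real" where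
  "s_i V d w vt G P v = (1 / vt) * (dbar V d w P (proj d P v) + G v)"

definition S2bar :: "'a set \<Rightarrow> ('a \<Rightarrow> 'a \<Rightarrow> real) \<Rightarrow> ('a \<Rightarrow> real) \<Rightarrow> real \<Rightarrow> ('a \<Rightarrow> real) \<Rightarrow> 'a list \<Rightarrow> real" where
  "S2bar V d w vt G P = (\<Sum>v\<in>V. w v * (s_i V d w vt G P v)\<^sup>2)"

definition Qbar :: "'a set \<Rightarrow> ('a \<Rightarrow> 'a \<Rightarrow> real) \<Rightarrow> ('a \<Rightarrow> real) \<Rightarrow> real \<Rightarrow> real \<Rightarrow> ('a \<Rightarrow> real) \<Rightarrow> real \<Rightarrow> 'a list \<Rightarrow> ereal" where
  "Qbar V d w lt vt G Gb P =
     (if lt * Sbar V d w vt Gb P < 1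
      then ereal (lt * S2bar V d w vt G P / (2 * (1 - lt * Sbar V d w vt Gb P)))
      else \<infinity>)"

end

theory Submission
  imports Defs
begin

lemma spath_alt: "is_spath V adj ps \<longleftrightarrow> ps \<noteq> [] \<and> distinct ps \<and> set ps \<subseteq> V \<and> successively adj ps"
  unfolding is_spath_def successively_conv_nth by blast

lemma plen_Cons: "plen len (a # l) = (if l = [] then 0 else len a (hd l) + plen len l)"
proof (cases l)
  case Nil thus ?thesis by (simp add: plen_def)
next
  case (Cons b l')
  have "plen len (a # l) = (\<Sum>i<Suc (length l'). len ((a#l) ! i) ((a#l) ! Suc i))"
    by (simp add: plen_def Cons)
  also have "\<dots> = len a b + (\<Sum>i<length l'. len (l ! i) (l ! Suc i))"
    by (subst sum.lessThan_Suc_shift) (simp add: Cons)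
  also have "(\<Sum>i<length l'. len (l ! i) (l ! Suc i)) = plen len l"
    by (simp add: plen_def Cons)
  finally show ?thesis by (simp add: Cons)
qed

lemma plen_append: "plen len (xs @ z # ys) = plen len (xs @ [z]) + plen len (z # ys)"
proof (induction xs)
  case Nil thus ?case by (simp add: plen_Cons)
next
  case (Cons a xs)
  have h: "hd (xs @ z # ys) = hd (xs @ [z])" by (cases xs) auto
  show ?case using Cons by (simp add: plen_Cons h)
qed

locale wt =
  fixes V :: "'a set" and adj and len :: "'a \<Rightarrow> 'a \<Rightarrow> real"
  assumes tree: "is_weighted_tree V adj len"
begin

lemma finV: "finite V" using tree by (simp add: is_weighted_tree_def)
lemma adjV: "adj x y \<Longrightarrow> x \<in> V \<and> y \<in> V" using tree by (simp add: is_weighted_tree_def)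
lemma adj_sym: "adj x y \<Longrightarrow> adj y x" using tree by (simp add: is_weighted_tree_def)
lemma len_sym: "adj x y \<Longrightarrow> len x y = len y x" using tree by (simp add: is_weighted_tree_def)
lemma len_pos: "adj x y \<Longrightarrow> 0 < len x y" using tree by (simp add: is_weighted_tree_def)
lemma conn: "graph_connected V adj" using tree by (simp add: is_weighted_tree_def)
lemma acyc: "\<not> is_cycle V adj cs" using tree by (simp add: is_weighted_tree_def)

abbreviation "sp \<equiv> is_spath V adj"

lemma succ_adj_rev: "successively adj (rev xs) \<longleftrightarrow> successively adj xs"
proof -
  have "successively (\<lambda>x y. adj y x) xs \<longleftrightarrow> successively adj xs"
    by (rule iffI; erule successively_mono; simp add: adj_sym)
  thus ?thesis by simp
qed

lemma sp_rev: "sp ps \<Longrightarrow> sp (rev ps)"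
  by (simp add: spath_alt succ_adj_rev del: successively_rev)

lemma sp_prefix: "sp (xs @ ys) \<Longrightarrow> xs \<noteq> [] \<Longrightarrow> sp xs"
  by (auto simp: spath_alt successively_append_iff)

lemma sp_suffix: "sp (xs @ ys) \<Longrightarrow> ys \<noteq> [] \<Longrightarrow> sp ys"
  by (auto simp: spath_alt successively_append_iff)

lemma sp_concat:
  assumes "sp (xs @ [z])" "sp (z # ys)" "set xs \<inter> set (z # ys) = {}"
  shows "sp (xs @ z # ys)"
  using assms by (auto simp: spath_alt successively_append_iff successively_Cons)

lemma no_fork:
  assumes p: "sp (x # ps)" and q: "sp (x # qs)" and ne: "ps \<noteq> []" "qs \<noteq> []"
    and l: "last ps = last qs" and h: "hd ps \<noteq> hd qs"
  shows False
proof -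
  have "\<exists>y\<in>set qs. y \<in> set ps" using l ne by (metis last_in_set)
  then obtain C z D where qs: "qs = C @ z # D" and z: "z \<in> set ps" and C: "\<forall>y\<in>set C. y \<notin> set ps"
    using split_list_first_prop[of qs "\<lambda>y. y \<in> set ps"] by blast
  obtain A B where ps: "ps = A @ z # B" using z by (meson split_list)
  define cs where "cs = x # A @ rev (C @ [z])"
  have xps: "x \<notin> set ps" and xqs: "x \<notin> set qs" using p q by (auto simp: spath_alt)
  have s1: "successively adj (x # A @ [z])"
  proof -
    have "x # ps = (x # A @ [z]) @ B" by (simp add: ps)
    then show ?thesis using p unfolding spath_alt by (metis successively_append_iff)
  qed
  have s2: "successively adj (C @ [z])"
  proof -
    have "x # qs = (x # C @ [z]) @ D" by (simp add: qs)
    then have "successively adj (x # C @ [z])" using q unfolding spath_alt by (metis successively_append_iff)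
    then show ?thesis by (metis append_Cons append_Nil successively_append_iff)
  qed
  have s2': "successively adj (rev (C @ [z]))" using s2 succ_adj_rev by blast
  have "successively adj cs"
  proof -
    have e: "cs = (x # A) @ rev (C @ [z])" by (simp add: cs_def)
    have "successively adj (x # A)" "adj (last (x # A)) z"
      using s1 successively_append_iff[of adj "x # A" "[z]"] by auto
    then show ?thesis unfolding e using s2' by (subst successively_append_iff) simp
  qed
  moreover have "distinct cs"
    unfolding cs_def using p q xps xqs C unfolding ps qs spath_alt by auto
  moreover have "set cs \<subseteq> V" unfolding cs_def using p q unfolding ps qs spath_alt by auto
  moreover have lc: "last cs = hd qs" unfolding cs_def qs by (cases C) auto
  moreover have "adj (last cs) (hd cs)"
  proof -
    have "adj (hd qs) x" using q ne by (cases qs) (auto simp: spath_alt adj_sym)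
    thus ?thesis using lc by (simp add: cs_def)
  qed
  moreover have "3 \<le> length cs"
  proof (cases C)
    case Nil
    then have "z = hd qs" using qs by simp
    then have "A \<noteq> []" using h ps by auto
    thus ?thesis using Nil by (cases A) (simp_all add: cs_def)
  next
    case (Cons c C') thus ?thesis by (simp add: cs_def)
  qed
  ultimately have "is_cycle V adj cs" unfolding is_cycle_def spath_alt cs_def by simp
  thus False using acyc by blast
qed

lemma sp_unique:
  "sp ps \<Longrightarrow> sp qs \<Longrightarrow> hd ps = hd qs \<Longrightarrow> last ps = last qs \<Longrightarrow> ps = qs"
proof (induction ps arbitrary: qs)
  case Nil thus ?case by (simp add: spath_alt)
next
  case (Cons x ps)
  obtain qs' where qs: "qs = x # qs'" using Cons.prems by (cases qs) (auto simp: spath_alt)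
  show ?case
  proof (cases "ps = [] \<or> qs' = []")
    case True
    then show ?thesis using Cons.prems unfolding qs spath_alt
      by (metis distinct.simps(2) last.simps last_in_set)
  next
    case False
    then have ne: "ps \<noteq> []" "qs' \<noteq> []" by auto
    have l: "last ps = last qs'" using Cons.prems ne qs by simp
    show ?thesis
    proof (cases "hd ps = hd qs'")
      case True
      have "sp ps" using sp_suffix[of "[x]" ps] Cons.prems ne by simp
      moreover have "sp qs'" using sp_suffix[of "[x]" qs'] Cons.prems ne qs by simp
      ultimately have "ps = qs'" using Cons.IH True l by blast
      thus ?thesis using qs by simp
    next
      case False
      thus ?thesis using no_fork[of x ps qs'] Cons.prems qs ne l by blast
    qed
  qed
qed

abbreviation "d \<equiv> tdist V adj len"

lemma d_eq: "sp ps \<Longrightarrow> d (hd ps) (last ps) = plen len ps"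
  unfolding tdist_def by (rule arg_cong[where f="plen len"], rule the_equality) (auto intro: sp_unique)

lemma ex_path: "x \<in> V \<Longrightarrow> y \<in> V \<Longrightarrow> \<exists>ps. sp ps \<and> hd ps = x \<and> last ps = y"
  using conn unfolding graph_connected_def by blast

lemma plen_nonneg: "successively adj ps \<Longrightarrow> 0 \<le> plen len ps"
proof (induction ps)
  case (Cons a ps)
  have s: "successively adj ps" using Cons.prems by (cases ps) auto
  show ?case
  proof (cases ps)
    case Nil thus ?thesis by (simp add: plen_Cons)
  next
    case (Cons b ps')
    have "adj a b" using Cons.prems Cons by simp
    thus ?thesis using Cons.IH[OF s] len_pos[of a b] plen_Cons[of len a ps] by (simp add: Cons)
  qed
qed (simp add: plen_def)

lemma plen_rev: "successively adj ps \<Longrightarrow> plen len (rev ps) = plen len ps"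
proof (induction ps)
  case (Cons a ps)
  show ?case
  proof (cases ps)
    case Nil thus ?thesis by simp
  next
    case (Cons b ps')
    have ab: "adj a b" and s: "successively adj ps" using Cons.prems Cons by auto
    have "plen len (rev (a # ps)) = plen len (rev ps' @ b # [a])" by (simp add: Cons)
    also have "\<dots> = plen len (rev ps) + len b a" by (subst plen_append) (simp add: Cons plen_Cons)
    also have "\<dots> = plen len (a # ps)" using Cons.IH[OF s] len_sym[OF ab] by (simp add: plen_Cons Cons)
    finally show ?thesis .
  qed
qed (simp)

lemma d_sym: assumes "x \<in> V" "y \<in> V" shows "d x y = d y x"
proof -
  obtain ps where p: "sp ps" "hd ps = x" "last ps = y" using ex_path assms by blast
  have "d y x = plen len (rev ps)" using d_eq[OF sp_rev[OF p(1)]] p p(1)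
    by (simp add: spath_alt hd_rev last_rev)
  also have "\<dots> = plen len ps" using p(1) plen_rev by (simp add: spath_alt)
  finally show ?thesis using d_eq[OF p(1)] p by simp
qed

lemma d_nonneg: assumes "x \<in> V" "y \<in> V" shows "0 \<le> d x y"
proof -
  obtain ps where p: "sp ps" "hd ps = x" "last ps = y" using ex_path assms by blast
  thus ?thesis using d_eq[OF p(1)] plen_nonneg[of ps] by (simp add: spath_alt)
qed

lemma d_pos: assumes "x \<in> V" "y \<in> V" "x \<noteq> y" shows "0 < d x y"
proof -
  obtain ps where p: "sp ps" "hd ps = x" "last ps = y" using ex_path assms by blast
  then obtain b ps' where ps: "ps = x # b # ps'" using assms(3)
    by (cases ps; cases "tl ps") (auto simp: spath_alt)
  have "adj x b" "successively adj (b # ps')" using p(1) by (auto simp: spath_alt ps)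
  then have "0 < plen len ps" unfolding ps
    using plen_Cons[of len x "b # ps'"] by (simp add: add_pos_nonneg len_pos plen_nonneg)
  thus ?thesis using d_eq[OF p(1)] p by simp
qed

lemma d_split:
  assumes "sp (A @ z # B)"
  shows "d (hd (A @ [z])) (last (z # B)) = d (hd (A @ [z])) z + d z (last (z # B))"
proof -
  have p1: "sp (A @ [z])" using sp_prefix[of "A @ [z]" B] assms by simp
  have p2: "sp (z # B)" using sp_suffix[of A "z # B"] assms by simp
  have "d (hd (A @ z # B)) (last (A @ z # B)) = plen len (A @ z # B)" using d_eq[OF assms] .
  moreover have "hd (A @ z # B) = hd (A @ [z])" by (cases A) auto
  moreover have "last (A @ z # B) = last (z # B)" by simp
  ultimately show ?thesis using d_eq[OF p1] d_eq[OF p2] plen_append[of len A z B] by simp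
qed

lemma sub_path1:
  assumes "sp (A @ a # B)" "b \<in> set (a # B)"
  shows "\<exists>E. sp (a # E) \<and> last (a # E) = b \<and> set (a # E) \<subseteq> set (A @ a # B)"
proof -
  obtain C D where "a # B = C @ b # D" using assms(2) by (meson split_list)
  moreover have "sp (a # B)" using sp_suffix[of A "a # B"] assms by simp
  ultimately have sC: "sp (C @ [b])" using sp_prefix[of "C @ [b]" D] by simp
  have hC: "hd (C @ [b]) = a" using \<open>a # B = C @ b # D\<close> by (cases C) auto
  have eq: "C @ [b] = a # tl (C @ [b])" using list.collapse[of "C @ [b]"] hC by simp
  have "set (C @ [b]) \<subseteq> set (a # B)" by (simp add: \<open>a # B = C @ b # D\<close>) auto
  then have "set (a # tl (C @ [b])) \<subseteq> set (A @ a # B)" by (simp flip: eq) auto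
  moreover have "last (a # tl (C @ [b])) = b" by (simp flip: eq)
  moreover have "sp (a # tl (C @ [b]))" using sC by (simp flip: eq)
  ultimately show ?thesis by blast
qed

lemma sub_path:
  assumes "sp P" "a \<in> set P" "b \<in> set P"
  shows "\<exists>E. sp (a # E) \<and> last (a # E) = b \<and> set (a # E) \<subseteq> set P"
proof -
  obtain A B where P: "P = A @ a # B" using assms(2) by (meson split_list)
  show ?thesis
  proof (cases "b \<in> set (a # B)")
    case True thus ?thesis using sub_path1 assms P by blast
  next
    case False
    then have "b \<in> set (a # rev A)" using assms P by auto
    moreover have "sp (rev B @ a # rev A)" using sp_rev[OF assms(1)] P by simp
    ultimately obtain E where E: "sp (a # E)" "last (a # E) = b" "set (a # E) \<subseteq> set (rev B @ a # rev A)"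
      using sub_path1[of "rev B" a "rev A" b] by blast
    have "set (rev B @ a # rev A) = set P" using P by auto
    with E show ?thesis by (intro exI[of _ E] conjI) auto
  qed
qed

lemma key:
  assumes P: "sp P" and v: "v \<in> V"
  shows "\<exists>r\<in>set P. \<forall>q\<in>set P. d v q = d v r + d r q"
proof -
  have PV: "set P \<subseteq> V" and Pne: "P \<noteq> []" using P by (auto simp: spath_alt)
  have "hd P \<in> V" using PV Pne by auto
  then obtain W where W: "sp W" "hd W = v" "last W = hd P" using ex_path v by blast
  have "last W \<in> set W" using W(1) by (simp add: spath_alt)
  then have "\<exists>y\<in>set W. y \<in> set P" using W(3) Pne hd_in_set[of P] by metis
  then obtain C r D where WC: "W = C @ r # D" and r: "r \<in> set P" and C: "\<forall>y\<in>set C. y \<notin> set P"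
    using split_list_first_prop[of W "\<lambda>y. y \<in> set P"] by blast
  have pC: "sp (C @ [r])" using sp_prefix[of "C @ [r]" D] W WC by simp
  have hC: "hd (C @ [r]) = v" using W WC by (cases C) auto
  show ?thesis
  proof (intro bexI[OF _ r] ballI)
    fix q assume q: "q \<in> set P"
    obtain E where E: "sp (r # E)" "last (r # E) = q" "set (r # E) \<subseteq> set P"
      using sub_path[OF P r q] by blast
    have "sp (C @ r # E)" using sp_concat[OF pC E(1)] C E(3) by blast
    from d_split[OF this] show "d v q = d v r + d r q" using hC E(2) by simp
  qed
qed

lemma proj_eq:
  assumes P: "sp P" and v: "v \<in> V" and r: "r \<in> set P" and K: "\<forall>q\<in>set P. d v q = d v r + d r q"
  shows "proj d P v = r"
proof -
  have PV: "set P \<subseteq> V" using P by (simp add: spath_alt)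
  have rV: "r \<in> V" using r PV by auto
  have strict: "d r v < d q v" if "q \<in> set P" "q \<noteq> r" for q
  proof -
    have qV: "q \<in> V" using that PV by auto
    have "0 < d r q" using d_pos[OF rV qV] that by auto
    moreover have "d v q = d v r + d r q" using K that(1) by blast
    ultimately show ?thesis using d_sym[OF v qV] d_sym[OF v rV] by linarith
  qed
  show ?thesis unfolding proj_def
  proof (rule the_equality)
    show "r \<in> set P \<and> (\<forall>q\<in>set P. q \<noteq> r \<longrightarrow> d r v < d q v)" using r strict by blast
  next
    fix p assume p: "p \<in> set P \<and> (\<forall>q\<in>set P. q \<noteq> p \<longrightarrow> d p v < d q v)"
    show "p = r"
    proof (rule ccontr)
      assume "p \<noteq> r"
      then have "d p v < d r v" "d r v < d p v" using p r strict by auto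
      thus False by simp
    qed
  qed
qed

lemma proj_prop:
  assumes "sp P" "v \<in> V"
  shows "proj d P v \<in> set P \<and> (\<forall>q\<in>set P. d v q = d v (proj d P v) + d (proj d P v) q)"
proof -
  obtain r where r: "r \<in> set P" and K: "\<forall>q\<in>set P. d v q = d v r + d r q" using key[OF assms] by blast
  have e: "proj d P v = r" by (rule proj_eq[OF assms r K])
  show ?thesis unfolding e using r K by blast
qed

lemma triangle:
  assumes x: "x \<in> V" and y: "y \<in> V" and z: "z \<in> V"
  shows "d x z \<le> d x y + d y z"
proof -
  obtain ps where p: "sp ps" "hd ps = y" "last ps = z" using ex_path y z by blast
  obtain r where r: "r \<in> set ps" and K: "\<forall>q\<in>set ps. d x q = d x r + d r q" using key[OF p(1) x] by blast
  have yin: "y \<in> set ps" and zin: "z \<in> set ps" using p by (auto simp: spath_alt)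
  obtain A B where AB: "ps = A @ r # B" using r by (meson split_list)
  have "hd (A @ [r]) = y" using p(2) AB by (cases A) auto
  moreover have "last (r # B) = z" using p(3) AB by simp
  ultimately have sp: "d y z = d y r + d r z" using d_split[of A r B] p(1) AB by simp
  have rV: "r \<in> V" using r p(1) by (auto simp: spath_alt)
  have "0 \<le> d r y" using d_nonneg[OF rV y] .
  moreover have "0 \<le> d y r" using d_nonneg[OF y rV] .
  moreover have "d x z = d x r + d r z" using K zin by blast
  moreover have "d x y = d x r + d r y" using K yin by blast
  ultimately show ?thesis using sp by linarith
qed

lemma lip:
  assumes P: "sp P" and P': "sp P'" and sub: "set P \<subseteq> set P'" and u: "u \<in> V" and v: "v \<in> V"
  shows "d (proj d P u) (proj d P v) \<le> d (proj d P' u) (proj d P' v)"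
proof -
  define a where "a = proj d P u"
  define b where "b = proj d P v"
  define x where "x = proj d P' u"
  define y where "y = proj d P' v"
  note Pu = proj_prop[OF P u, folded a_def]
  note Pv = proj_prop[OF P v, folded b_def]
  note P'u = proj_prop[OF P' u, folded x_def]
  note P'v = proj_prop[OF P' v, folded y_def]
  have PV: "set P' \<subseteq> V" using P' by (simp add: spath_alt)
  have aP: "a \<in> set P" and bP: "b \<in> set P" using Pu Pv by blast+
  have ab: "a \<in> set P'" "b \<in> set P'" using aP bP sub by blast+
  have "x \<in> set P'" "y \<in> set P'" using P'u P'v by blast+
  then have V4: "a \<in> V" "b \<in> V" "x \<in> V" "y \<in> V" using ab PV by blast+
  have e1: "d u b = d u a + d a b" using Pu bP by blast
  have e2: "d u b = d u x + d x b" "d u a = d u x + d x a" using P'u ab by blast+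
  have e3: "d v a = d v b + d b a" using Pv aP by blast
  have e4: "d v a = d v y + d y a" "d v b = d v y + d y b" using P'v ab by blast+
  have t1: "d x b \<le> d x y + d y b" using triangle V4 by blast
  have t2: "d y a \<le> d y x + d x a" using triangle V4 by blast
  have s1: "d b a = d a b" "d y x = d x y" using d_sym V4 by blast+
  show ?thesis unfolding a_def[symmetric] b_def[symmetric] x_def[symmetric] y_def[symmetric]
    using e1 e2 e3 e4 t1 t2 s1 by linarith
qed

end

lemma dbar_eq:
  assumes fin: "finite V" and im: "proj d P ` V \<subseteq> set P"
  shows "dbar V d w P p = (\<Sum>u\<in>V. w u * d (proj d P u) p)"
proof -
  have "dbar V d w P p = (\<Sum>q\<in>set P. \<Sum>u\<in>{u\<in>V. proj d P u = q}. w u * d (proj d P u) p)"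
    unfolding dbar_def branch_w_def sum_distrib_right by (intro sum.cong refl) auto
  also have "\<dots> = (\<Sum>u\<in>V. w u * d (proj d P u) p)"
    by (rule sum.group[OF fin finite_set im])
  finally show ?thesis .
qed

theorem corollary2:
  fixes V :: "'a set" and adj :: "'a \<Rightarrow> 'a \<Rightarrow> bool" and len :: "'a \<Rightarrow> 'a \<Rightarrow> real"
    and lam :: "'a \<Rightarrow> real" and G :: "'a \<Rightarrow> real" and Gb :: real and vt :: real
    and P P' :: "'a list"
  assumes tree: "is_weighted_tree V adj len"
    and lam_nonneg: "\<forall>v\<in>V. 0 \<le> lam v"
    and lam_pos: "0 < (\<Sum>v\<in>V. lam v)"
    and vt_pos: "0 < vt"
    and G_nonneg: "\<forall>v\<in>V. 0 \<le> G v"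
    and Gb_nonneg: "0 \<le> Gb"
    and P_path: "is_spath V adj P"
    and P'_path: "is_spath V adj P'"
    and sub: "set P \<subseteq> set P'"
  shows "T1 V (tdist V adj len) (weight V lam) vt P' \<le> T1 V (tdist V adj len) (weight V lam) vt P
       \<and> T2 V (tdist V adj len) (weight V lam) vt P \<le> T2 V (tdist V adj len) (weight V lam) vt P'
       \<and> Sbar V (tdist V adj len) (weight V lam) vt Gb P \<le> Sbar V (tdist V adj len) (weight V lam) vt Gb P'
       \<and> S2bar V (tdist V adj len) (weight V lam) vt G P \<le> S2bar V (tdist V adj len) (weight V lam) vt G P'
       \<and> Qbar V (tdist V adj len) (weight V lam) (\<Sum>v\<in>V. lam v) vt G Gb P
           \<le> Qbar V (tdist V adj len) (weight V lam) (\<Sum>v\<in>V. lam v) vt G Gb P'"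
proof -
  interpret wt V adj len by (rule wt.intro[OF tree])
  define w where "w = weight V lam"
  define lt where "lt = (\<Sum>v\<in>V. lam v)"
  have w0: "0 \<le> w v" if "v \<in> V" for v
    unfolding w_def weight_def using lam_nonneg that lam_pos by auto
  have PV: "set P \<subseteq> V" and P'V: "set P' \<subseteq> V" using P_path P'_path by (auto simp: spath_alt)
  have imP: "proj d P ` V \<subseteq> set P" using proj_prop[OF P_path] by blast
  have imP': "proj d P' ` V \<subseteq> set P'" using proj_prop[OF P'_path] by blast
  have dbP: "dbar V d w P p = (\<Sum>u\<in>V. w u * d (proj d P u) p)" for p
    by (rule dbar_eq[OF finV imP])
  have dbP': "dbar V d w P' p = (\<Sum>u\<in>V. w u * d (proj d P' u) p)" for p
    by (rule dbar_eq[OF finV imP'])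
  have dle: "dbar V d w P (proj d P v) \<le> dbar V d w P' (proj d P' v)" if v: "v \<in> V" for v
    unfolding dbP dbP'
    by (intro sum_mono mult_left_mono lip[OF P_path P'_path sub _ v] w0)
  have dnn: "0 \<le> dbar V d w P (proj d P v)" if v: "v \<in> V" for v
    unfolding dbP
  proof (intro sum_nonneg mult_nonneg_nonneg w0)
    fix u assume u: "u \<in> V"
    show "0 \<le> d (proj d P u) (proj d P v)" using imP u v PV by (intro d_nonneg) auto
  qed (auto)
  have ivt: "0 \<le> 1 / vt" using vt_pos by simp
  have pd: "pdist d P' v \<le> pdist d P v" for v
    unfolding pdist_def
    by (rule Min_antimono) (use sub P_path in \<open>auto simp: spath_alt\<close>)
  have T1: "T1 V d w vt P' \<le> T1 V d w vt P"
    unfolding T1_def by (intro mult_left_mono[OF _ ivt] sum_mono mult_left_mono[OF pd] w0)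
  have T2: "T2 V d w vt P \<le> T2 V d w vt P'"
    unfolding T2_def by (intro mult_left_mono[OF _ ivt] sum_mono mult_left_mono[OF dle] w0)
  have S: "Sbar V d w vt Gb P \<le> Sbar V d w vt Gb P'"
    unfolding Sbar_def using T2 by simp
  have si: "s_i V d w vt G P v \<le> s_i V d w vt G P' v" "0 \<le> s_i V d w vt G P v" if "v \<in> V" for v
  proof -
    have "dbar V d w P (proj d P v) + G v \<le> dbar V d w P' (proj d P' v) + G v" using dle[OF that] by simp
    then show "s_i V d w vt G P v \<le> s_i V d w vt G P' v" unfolding s_i_def using ivt by (rule mult_left_mono)
    show "0 \<le> s_i V d w vt G P v" unfolding s_i_def using dnn[OF that] G_nonneg that ivt by simp
  qed
  have S2: "S2bar V d w vt G P \<le> S2bar V d w vt G P'"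
    unfolding S2bar_def by (intro sum_mono mult_left_mono power_mono si w0)
  have S2nn: "0 \<le> S2bar V d w vt G P"
    unfolding S2bar_def by (intro sum_nonneg mult_nonneg_nonneg w0) auto
  have Q: "Qbar V d w lt vt G Gb P \<le> Qbar V d w lt vt G Gb P'"
  proof (cases "lt * Sbar V d w vt Gb P' < 1")
    case True
    have lt0: "0 < lt" using lam_pos lt_def by simp
    have l1: "lt * Sbar V d w vt Gb P \<le> lt * Sbar V d w vt Gb P'"
      using S lt0 by (simp add: mult_left_mono)
    then have T: "lt * Sbar V d w vt Gb P < 1" using True by linarith
    have "lt * S2bar V d w vt G P / (2 * (1 - lt * Sbar V d w vt Gb P))
        \<le> lt * S2bar V d w vt G P' / (2 * (1 - lt * Sbar V d w vt Gb P'))"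
      by (rule frac_le) (use S2 S2nn lt0 True l1 in \<open>auto intro: mult_left_mono\<close>)
    thus ?thesis unfolding Qbar_def using True T by simp
  next
    case False thus ?thesis unfolding Qbar_def by simp
  qed
  show ?thesis using T1 T2 S S2 Q unfolding w_def lt_def by blast
qed

end
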